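(* For every positive integer $t$, $$B_0(1,2t+1)=p_{de}(2t),\qquad B_0(1,2t)=p_{de}(2t-1)+p_{do}(2t-1),$$ $$B_1(1,2t)=p_{de}(2t-1),\qquad B_1(1,2t+1)=p_{de}(2t)+p_{do}(2t).$$
   Context: For a partition $\pi$, $s(\pi)$ is its smallest part. $\mathrm{Spt}1_{do}(n)$ is the set of partitions $\pi$ of $n$ in which $s(\pi)$ occurs exactly once and the remaining parts are pairwise distinct and each has parity different from that of $s(\pi)$. $B_0(1,n)$ (resp. $B_1(1,n)$) is the number of $\pi\in\mathrm{Spt}1_{do}(n)$ whose number of parts greater than $s(\pi)$ is even (resp. odd). $p_{de}(n)$ (resp. $p_{do}(n)$) is the number of partitions of $n$ into distinct even (resp. distinct odd) parts, with value $1$ at $n=0$. *)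

theory Defs
  imports Main "HOL-Library.Multiset"
begin

definition partitions :: "nat \<Rightarrow> nat multiset set" where
  "partitions n = {P. (\<forall>x\<in>#P. 0 < x) \<and> sum_mset P = n}"

definition spart :: "nat multiset \<Rightarrow> nat" where
  "spart P = Min (set_mset P)"

definition Spt1_do :: "nat \<Rightarrow> nat multiset set" where
  "Spt1_do n = {P \<in> partitions n. P \<noteq> {#} \<and> count P (spart P) = 1 \<and>
      (\<forall>x\<in>#P. x \<noteq> spart P \<longrightarrow> count P x = 1 \<and> odd x \<noteq> odd (spart P))}"

definition nbig :: "nat multiset \<Rightarrow> nat" where
  "nbig P = size (filter_mset (\<lambda>x. spart P < x) P)"

definition B0 :: "nat \<Rightarrow> nat" where
  "B0 n = card {P \<in> Spt1_do n. even (nbig P)}"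

definition B1 :: "nat \<Rightarrow> nat" where
  "B1 n = card {P \<in> Spt1_do n. odd (nbig P)}"

definition p_de :: "nat \<Rightarrow> nat" where
  "p_de n = card {P \<in> partitions n. \<forall>x\<in>#P. even x \<and> count P x = 1}"

definition p_do :: "nat \<Rightarrow> nat" where
  "p_do n = card {P \<in> partitions n. \<forall>x\<in>#P. odd x \<and> count P x = 1}"

end

theory Submission
  imports Defs
begin

lemma size_le_sum: "(\<forall>x\<in>#P. 0 < (x::nat)) \<Longrightarrow> size P \<le> sum_mset P"
  by (induction P) auto

lemma elem_le_sum: "(x::nat) \<in># P \<Longrightarrow> x \<le> sum_mset P"
  by (induction P) auto

lemma finite_partitions: "finite (partitions n)"
proof -
  have "partitions n \<subseteq> (\<Union>k\<in>{..n}. multisets_of_size {1..n} k)"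
  proof
    fix P assume "P \<in> partitions n"
    hence pos: "\<forall>x\<in>#P. 0 < x" and sm: "sum_mset P = n" unfolding partitions_def by blast+
    have "size P \<le> n" using size_le_sum[OF pos] sm by simp
    moreover have "set_mset P \<subseteq> {1..n}"
    proof
      fix x assume x: "x \<in># P"
      have "0 < x" using pos x by blast
      moreover have "x \<le> n" using elem_le_sum[OF x] sm by simp
      ultimately show "x \<in> {1..n}" by simp
    qed
    ultimately show "P \<in> (\<Union>k\<in>{..n}. multisets_of_size {1..n} k)"
      unfolding multisets_of_size_def by blast
  qed
  moreover have "finite (\<Union>k\<in>{..n}. multisets_of_size {1..n} k)"
    by (intro finite_UN_I finite_multisets_of_size) auto
  ultimately show ?thesis by (rule finite_subset)
qed

lemma sum_odd: "(\<forall>x\<in>#Q. odd (x::nat)) \<Longrightarrow> (even (sum_mset Q) \<longleftrightarrow> even (size Q))"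
  by (induction Q) auto

lemma sum_even: "(\<forall>x\<in>#Q. even (x::nat)) \<Longrightarrow> even (sum_mset Q)"
  by (induction Q) auto

lemma ev1: "even (s::nat) \<Longrightarrow> 0 < s \<Longrightarrow> 0 < s - 1 \<and> odd (s - 1)"
proof -
  assume a: "even s" "0 < s"
  from a(1) obtain k where k: "s = 2*k" by (rule evenE)
  hence "s - 1 = 2*(k-1)+1" using a by simp
  thus ?thesis by simp
qed
lemma od1: "odd (s::nat) \<Longrightarrow> s \<noteq> 1 \<Longrightarrow> 0 < s - 1 \<and> even (s - 1)"
proof -
  assume a: "odd s" "s \<noteq> 1"
  from a(1) obtain k where k: "s = 2*k+1" by (rule oddE)
  thus ?thesis using a by simp
qed

definition goodA :: "nat \<Rightarrow> nat \<Rightarrow> nat multiset \<Rightarrow> bool" where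
  "goodA n s Q \<longleftrightarrow> 0 < s \<and> s + sum_mset Q = n \<and> (\<forall>x\<in>#Q. s < x \<and> count Q x = 1 \<and> odd x \<noteq> odd s)"

lemma spart_add: "(\<forall>x\<in>#Q. s < x) \<Longrightarrow> spart (add_mset s Q) = s"
  unfolding spart_def by (rule Min_eqI) auto

lemma nbig_add: "(\<forall>x\<in>#Q. s < x) \<Longrightarrow> nbig (add_mset s Q) = size Q"
proof -
  assume a: "\<forall>x\<in>#Q. s < x"
  hence "filter_mset (\<lambda>x. s < x) Q = Q" by (simp add: filter_mset_eq_conv)
  thus ?thesis using a by (simp add: nbig_def spart_add)
qed

lemma Spt_iff: "P \<in> Spt1_do n \<longleftrightarrow> (\<exists>s Q. P = add_mset s Q \<and> goodA n s Q)"
proof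
  assume P: "P \<in> Spt1_do n"
  define s where "s = spart P"
  define Q where "Q = P - {#s#}"
  have ne: "P \<noteq> {#}" and c: "count P s = 1" and pos: "\<forall>x\<in>#P. 0 < x" and sm: "sum_mset P = n"
    and oth: "\<forall>x\<in>#P. x \<noteq> s \<longrightarrow> count P x = 1 \<and> odd x \<noteq> odd s"
    using P unfolding Spt1_do_def partitions_def s_def by auto
  have sP: "s \<in># P" using ne unfolding s_def spart_def
    by (metis Min_in finite_set_mset set_mset_eq_empty_iff)
  have smin: "\<forall>x\<in>#P. s \<le> x" unfolding s_def spart_def by simp
  have PQ: "P = add_mset s Q" using sP Q_def by simp
  have sQ: "s \<notin># Q" using c PQ by (simp add: not_in_iff)
  have "\<forall>x\<in>#Q. s < x \<and> count Q x = 1 \<and> odd x \<noteq> odd s"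
  proof
    fix x assume x: "x \<in># Q"
    hence xs: "x \<noteq> s" using sQ by auto
    have xP: "x \<in># P" using x PQ by simp
    have "count Q x = count P x" using PQ xs by simp
    thus "s < x \<and> count Q x = 1 \<and> odd x \<noteq> odd s" using oth xP xs smin by force
  qed
  moreover have "0 < s" using pos sP by auto
  moreover have "s + sum_mset Q = n" using sm PQ by simp
  ultimately show "\<exists>s Q. P = add_mset s Q \<and> goodA n s Q" using PQ unfolding goodA_def by blast
next
  assume "\<exists>s Q. P = add_mset s Q \<and> goodA n s Q"
  then obtain s Q where PQ: "P = add_mset s Q" and g: "goodA n s Q" by blast
  have gt: "\<forall>x\<in>#Q. s < x" using g unfolding goodA_def by auto
  have sp: "spart P = s" using PQ spart_add[OF gt] by simp
  have sQ: "s \<notin># Q" using gt by auto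
  have g1: "0 < s" and g2: "s + sum_mset Q = n" and g3: "\<forall>x\<in>#Q. s < x \<and> count Q x = 1 \<and> odd x \<noteq> odd s"
    using g unfolding goodA_def by auto
  have "\<forall>x\<in>#P. 0 < x" using g1 g3 PQ by auto
  moreover have "sum_mset P = n" using g2 PQ by simp
  moreover have "count P s = 1" using PQ sQ by (simp add: count_eq_zero_iff)
  moreover have "\<forall>x\<in>#P. x \<noteq> s \<longrightarrow> count P x = 1 \<and> odd x \<noteq> odd s"
    using g3 PQ by auto
  moreover have "P \<noteq> {#}" using PQ by simp
  ultimately show "P \<in> Spt1_do n" unfolding Spt1_do_def partitions_def by (simp add: sp)
qed

definition distp :: "(nat \<Rightarrow> bool) \<Rightarrow> nat \<Rightarrow> nat multiset set" where
  "distp p n = {P \<in> partitions n. \<forall>x\<in>#P. p x \<and> count P x = 1}"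

definition goodD :: "(nat \<Rightarrow> bool) \<Rightarrow> nat \<Rightarrow> nat \<Rightarrow> nat multiset \<Rightarrow> bool" where
  "goodD p n m Q \<longleftrightarrow> 0 < m \<and> p m \<and> m + sum_mset Q = n \<and> (\<forall>x\<in>#Q. m < x \<and> p x \<and> count Q x = 1)"

lemma distp_iff: assumes n: "0 < n"
  shows "D \<in> distp p n \<longleftrightarrow> (\<exists>m Q. D = add_mset m Q \<and> goodD p n m Q)"
proof
  assume P: "D \<in> distp p n"
  define s where "s = spart D"
  define Q where "Q = D - {#s#}"
  have pos: "\<forall>x\<in>#D. 0 < x" and sm: "sum_mset D = n"
    and oth: "\<forall>x\<in>#D. p x \<and> count D x = 1"
    using P unfolding distp_def partitions_def by auto
  have ne: "D \<noteq> {#}" using sm n by auto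
  have sP: "s \<in># D" using ne unfolding s_def spart_def
    by (metis Min_in finite_set_mset set_mset_eq_empty_iff)
  have smin: "\<forall>x\<in>#D. s \<le> x" unfolding s_def spart_def by simp
  have PQ: "D = add_mset s Q" using sP Q_def by simp
  have c: "count D s = 1" using oth sP by auto
  have sQ: "s \<notin># Q" using c PQ by (simp add: not_in_iff)
  have "\<forall>x\<in>#Q. s < x \<and> p x \<and> count Q x = 1"
  proof
    fix x assume x: "x \<in># Q"
    hence xs: "x \<noteq> s" using sQ by auto
    have xP: "x \<in># D" using x PQ by simp
    have "count Q x = count D x" using PQ xs by simp
    thus "s < x \<and> p x \<and> count Q x = 1" using oth xP xs smin by force
  qed
  moreover have "0 < s" using pos sP by auto
  moreover have "p s" using oth sP by auto
  moreover have "s + sum_mset Q = n" using sm PQ by simp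
  ultimately show "\<exists>s Q. D = add_mset s Q \<and> goodD p n s Q" using PQ unfolding goodD_def by blast
next
  assume "\<exists>s Q. D = add_mset s Q \<and> goodD p n s Q"
  then obtain s Q where PQ: "D = add_mset s Q" and g: "goodD p n s Q" by blast
  have g1: "0 < s" and g0: "p s" and g2: "s + sum_mset Q = n" and g3: "\<forall>x\<in>#Q. s < x \<and> p x \<and> count Q x = 1"
    using g unfolding goodD_def by blast+
  have sQ: "s \<notin># Q" using g3 by auto
  have "\<forall>x\<in>#D. 0 < x" using g1 g3 PQ by auto
  moreover have "sum_mset D = n" using g2 PQ by simp
  moreover have "count D s = 1" using PQ sQ by (simp add: count_eq_zero_iff)
  moreover have "\<forall>x\<in>#D. x \<noteq> s \<longrightarrow> count D x = 1 \<and> p x"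
    using g3 PQ by auto
  ultimately show "D \<in> distp p n" unfolding distp_def partitions_def using PQ g0 by auto
qed

lemma par: assumes "goodA n s Q"
  shows "(odd s \<longrightarrow> odd n) \<and> (even s \<longrightarrow> (even n \<longleftrightarrow> even (size Q)))"
proof -
  have a: "s + sum_mset Q = n" "\<forall>x\<in>#Q. odd x \<noteq> odd s" using assms unfolding goodA_def by auto
  show ?thesis
  proof (cases "odd s")
    case True
    hence "even (sum_mset Q)" using a(2) sum_even by auto
    thus ?thesis using True a(1) by auto
  next
    case False
    hence "even (sum_mset Q) \<longleftrightarrow> even (size Q)" using a(2) sum_odd by auto
    thus ?thesis using False a(1) by auto
  qed
qed

definition fA :: "nat multiset \<Rightarrow> nat multiset" where
  "fA P = add_mset (spart P - 1) (P - {#spart P#})"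

definition gA :: "nat multiset \<Rightarrow> nat multiset" where
  "gA P = add_mset (spart P + 1) (P - {#spart P#})"

definition phi :: "nat multiset \<Rightarrow> nat multiset" where
  "phi P = (if spart P = 1 then P - {#1#} else fA P)"

definition psi :: "bool \<Rightarrow> nat multiset \<Rightarrow> nat multiset" where
  "psi b E = (if even (size E) = b then add_mset 1 E else gA E)"

lemma LA: assumes "2 \<le> n"
  shows "bij_betw fA {P\<in>Spt1_do n. even (spart P)} (distp odd (n-1))"
proof (rule bij_betw_byWitness[where f'=gA])
  show "\<forall>a\<in>{P\<in>Spt1_do n. even (spart P)}. gA (fA a) = a"
  proof
    fix P assume "P \<in> {P\<in>Spt1_do n. even (spart P)}"
    then obtain s Q where PQ: "P = add_mset s Q" and g: "goodA n s Q" using Spt_iff by blast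
    have gt: "\<forall>x\<in>#Q. s < x" and s0: "0 < s" using g unfolding goodA_def by auto
    have sp: "spart P = s" using PQ spart_add[OF gt] by simp
    have f: "fA P = add_mset (s-1) Q" unfolding fA_def using PQ spart_add[OF gt] by simp
    have gt2: "\<forall>x\<in>#Q. s - 1 < x" using gt by auto
    show "gA (fA P) = P" unfolding f gA_def spart_add[OF gt2] using s0 PQ by simp
  qed
  show "\<forall>a\<in>distp odd (n-1). fA (gA a) = a"
  proof
    fix D assume "D \<in> distp odd (n-1)"
    then obtain m Q where PQ: "D = add_mset m Q" and g: "goodD odd (n-1) m Q" using distp_iff assms by force
    have gt: "\<forall>x\<in>#Q. m < x" and om: "odd m" and oq: "\<forall>x\<in>#Q. odd x" using g unfolding goodD_def by blast+
    have sp: "spart D = m" using PQ spart_add[OF gt] by simp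
    have f: "gA D = add_mset (m+1) Q" unfolding gA_def using PQ spart_add[OF gt] by simp
    have gt2: "\<forall>x\<in>#Q. m + 1 < x"
    proof
      fix x assume "x \<in># Q" 
      hence "m < x" "odd x" using gt oq by auto
      thus "m + 1 < x" using om by (metis Suc_eq_plus1 Suc_lessI odd_Suc_div_two odd_two_times_div_two_succ even_Suc)
    qed
    show "fA (gA D) = D" unfolding f fA_def spart_add[OF gt2] using PQ by simp
  qed
  show "fA ` {P\<in>Spt1_do n. even (spart P)} \<subseteq> distp odd (n-1)"
  proof
    fix D assume "D \<in> fA ` {P\<in>Spt1_do n. even (spart P)}"
    then obtain P where P: "P \<in> Spt1_do n" "even (spart P)" and D: "D = fA P" by auto
    then obtain s Q where PQ: "P = add_mset s Q" and g: "goodA n s Q" using Spt_iff by blast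
    have gt: "\<forall>x\<in>#Q. s < x" and s0: "0 < s" using g unfolding goodA_def by auto
    have sp: "spart P = s" using PQ spart_add[OF gt] by simp
    have f: "fA P = add_mset (s-1) Q" unfolding fA_def using PQ spart_add[OF gt] by simp
    have es: "even s" using P sp by simp
    have s2: "0 < s - 1 \<and> odd (s - 1)" using ev1[OF es s0] .
    have g2: "s + sum_mset Q = n" and g3: "\<forall>x\<in>#Q. s < x \<and> count Q x = 1 \<and> odd x \<noteq> odd s"
      using g unfolding goodA_def by blast+
    have q: "\<forall>x\<in>#Q. s - 1 < x \<and> odd x \<and> count Q x = 1"
    proof
      fix x assume x: "x \<in># Q"
      have "s < x" "count Q x = 1" "odd x \<noteq> odd s" using g3 x by blast+
      thus "s - 1 < x \<and> odd x \<and> count Q x = 1" using es by simp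
    qed
    have "s - 1 + sum_mset Q = n - 1" using g2 s0 by simp
    hence "goodD odd (n-1) (s-1) Q" using q s2 unfolding goodD_def by blast
    thus "D \<in> distp odd (n-1)" using distp_iff assms D f by force
  qed
  show "gA ` distp odd (n-1) \<subseteq> {P\<in>Spt1_do n. even (spart P)}"
  proof
    fix P assume "P \<in> gA ` distp odd (n-1)"
    then obtain D where D: "D \<in> distp odd (n-1)" and P: "P = gA D" by auto
    then obtain m Q where PQ: "D = add_mset m Q" and g: "goodD odd (n-1) m Q" using distp_iff assms by force
    have gt: "\<forall>x\<in>#Q. m < x" and om: "odd m" and oq: "\<forall>x\<in>#Q. odd x" using g unfolding goodD_def by blast+
    have sp: "spart D = m" using PQ spart_add[OF gt] by simp
    have f: "gA D = add_mset (m+1) Q" unfolding gA_def using PQ spart_add[OF gt] by simp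
    have gt2: "\<forall>x\<in>#Q. m + 1 < x"
    proof
      fix x assume "x \<in># Q" 
      hence "m < x" "odd x" using gt oq by auto
      thus "m + 1 < x" using om by (metis Suc_eq_plus1 Suc_lessI odd_Suc_div_two odd_two_times_div_two_succ even_Suc)
    qed
    have d1: "m + sum_mset Q = n - 1" and d2: "\<forall>x\<in>#Q. m < x \<and> odd x \<and> count Q x = 1"
      using g unfolding goodD_def by blast+
    have "m + 1 + sum_mset Q = n" using d1 assms by simp
    moreover have "\<forall>x\<in>#Q. m + 1 < x \<and> count Q x = 1 \<and> odd x \<noteq> odd (m + 1)" using d2 gt2 om by simp
    ultimately have "goodA n (m+1) Q" unfolding goodA_def by simp
    hence "P \<in> Spt1_do n" using Spt_iff P f by blast
    moreover have "spart P = m + 1" using P f spart_add[OF gt2] by simp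
    moreover have "even (m + 1)" using om by simp
    ultimately show "P \<in> {P\<in>Spt1_do n. even (spart P)}" by simp
  qed
qed

lemma even_gt: "(m::nat) < x \<Longrightarrow> even x = even m \<Longrightarrow> m + 1 < x"
  by (metis Suc_eq_plus1 Suc_lessI even_Suc)

lemma even_pos_gt1: "0 < (x::nat) \<Longrightarrow> even x \<Longrightarrow> 1 < x"
  by (auto elim: evenE)

lemma LB: assumes n: "3 \<le> n" "odd n"
  shows "bij_betw phi {P\<in>Spt1_do n. odd (spart P) \<and> even (nbig P) = b} (distp even (n-1))"
proof (rule bij_betw_byWitness[where f'="psi b"])
  have n1: "0 < n - 1" using n(1) by simp
  show "\<forall>a\<in>{P\<in>Spt1_do n. odd (spart P) \<and> even (nbig P) = b}. psi b (phi a) = a"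
  proof
    fix P assume P: "P \<in> {P\<in>Spt1_do n. odd (spart P) \<and> even (nbig P) = b}"
    then obtain s Q where PQ: "P = add_mset s Q" and g: "goodA n s Q" using Spt_iff by blast
    have gt: "\<forall>x\<in>#Q. s < x" and s0: "0 < s" using g unfolding goodA_def by auto
    have sp: "spart P = s" using PQ spart_add[OF gt] by simp
    have nb: "nbig P = size Q" using PQ nbig_add[OF gt] by simp
    have eb: "even (size Q) = b" using P nb by simp
    show "psi b (phi P) = P"
    proof (cases "s = 1")
      case True
      hence "phi P = Q" unfolding phi_def sp using PQ by simp
      thus ?thesis using eb PQ True by (simp add: psi_def)
    next
      case False
      hence f: "phi P = add_mset (s-1) Q" unfolding phi_def sp fA_def using PQ sp by simp
      have gt2: "\<forall>x\<in>#Q. s - 1 < x" using gt by auto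
      show ?thesis unfolding f psi_def gA_def spart_add[OF gt2] using eb s0 PQ by simp
    qed
  qed
  show "\<forall>a\<in>distp even (n-1). phi (psi b a) = a"
  proof
    fix D assume D: "D \<in> distp even (n-1)"
    then obtain m Q where PQ: "D = add_mset m Q" and g: "goodD even (n-1) m Q" using distp_iff[OF n1] by blast
    have gt: "\<forall>x\<in>#Q. m < x" and om: "even m" and oq: "\<forall>x\<in>#Q. even x" and m0: "0 < m"
      using g unfolding goodD_def by blast+
    have gt1: "\<forall>x\<in>#D. 1 < x" using D even_pos_gt1 unfolding distp_def partitions_def by blast
    have gt2: "\<forall>x\<in>#Q. m + 1 < x" using gt oq om even_gt by auto
    show "phi (psi b D) = D"
    proof (cases "even (size D) = b")
      case True
      thus ?thesis unfolding psi_def phi_def using spart_add[OF gt1] by simp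
    next
      case False
      have "gA D = add_mset (m+1) Q" unfolding gA_def using PQ spart_add[OF gt] by simp
      thus ?thesis unfolding psi_def phi_def fA_def using False spart_add[OF gt2] m0 PQ by simp
    qed
  qed
  show "phi ` {P\<in>Spt1_do n. odd (spart P) \<and> even (nbig P) = b} \<subseteq> distp even (n-1)"
  proof
    fix D assume "D \<in> phi ` {P\<in>Spt1_do n. odd (spart P) \<and> even (nbig P) = b}"
    then obtain P where P: "P \<in> Spt1_do n" "odd (spart P)" and D: "D = phi P" by auto
    then obtain s Q where PQ: "P = add_mset s Q" and g: "goodA n s Q" using Spt_iff by blast
    have gt: "\<forall>x\<in>#Q. s < x" and s0: "0 < s" using g unfolding goodA_def by auto
    have sp: "spart P = s" using PQ spart_add[OF gt] by simp
    have os: "odd s" using P sp by simp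
    show "D \<in> distp even (n-1)"
    proof (cases "s = 1")
      case True
      hence "D = Q" unfolding D phi_def sp using PQ by simp
      have g2: "s + sum_mset Q = n" and g3: "\<forall>x\<in>#Q. s < x \<and> count Q x = 1 \<and> odd x \<noteq> odd s"
        using g unfolding goodA_def by blast+
      have q: "\<forall>x\<in>#Q. 0 < x \<and> even x \<and> count Q x = 1"
      proof
        fix x assume x: "x \<in># Q"
        have "s < x" "count Q x = 1" "odd x \<noteq> odd s" using g3 x by blast+
        thus "0 < x \<and> even x \<and> count Q x = 1" using os by simp
      qed
      have "sum_mset Q = n - 1" using g2 True by simp
      thus ?thesis using q \<open>D = Q\<close> unfolding distp_def partitions_def by blast
    next
      case False
      hence f: "D = add_mset (s-1) Q" unfolding D phi_def sp fA_def using PQ sp by simp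
      have s2: "0 < s - 1 \<and> even (s - 1)" using od1[OF os False] .
      have g2: "s + sum_mset Q = n" and g3: "\<forall>x\<in>#Q. s < x \<and> count Q x = 1 \<and> odd x \<noteq> odd s"
        using g unfolding goodA_def by blast+
      have q: "\<forall>x\<in>#Q. s - 1 < x \<and> even x \<and> count Q x = 1"
      proof
        fix x assume x: "x \<in># Q"
        have "s < x" "count Q x = 1" "odd x \<noteq> odd s" using g3 x by blast+
        thus "s - 1 < x \<and> even x \<and> count Q x = 1" using os by simp
      qed
      have "s - 1 + sum_mset Q = n - 1" using g2 s0 by simp
      hence "goodD even (n-1) (s-1) Q" using q s2 unfolding goodD_def by blast
      thus ?thesis using distp_iff[OF n1] f by blast
    qed
  qed
  show "psi b ` distp even (n-1) \<subseteq> {P\<in>Spt1_do n. odd (spart P) \<and> even (nbig P) = b}"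
  proof
    fix P assume "P \<in> psi b ` distp even (n-1)"
    then obtain D where D: "D \<in> distp even (n-1)" and P: "P = psi b D" by auto
    then obtain m Q where PQ: "D = add_mset m Q" and g: "goodD even (n-1) m Q" using distp_iff[OF n1] by blast
    have gt: "\<forall>x\<in>#Q. m < x" and om: "even m" and oq: "\<forall>x\<in>#Q. even x" and m0: "0 < m"
      using g unfolding goodD_def by blast+
    have gt1: "\<forall>x\<in>#D. 1 < x" using D even_pos_gt1 unfolding distp_def partitions_def by blast
    have gt2: "\<forall>x\<in>#Q. m + 1 < x" using gt oq om even_gt by auto
    show "P \<in> {P\<in>Spt1_do n. odd (spart P) \<and> even (nbig P) = b}"
    proof (cases "even (size D) = b")
      case True
      hence P1: "P = add_mset 1 D" using P psi_def by simp
      have d1: "sum_mset D = n - 1" and d2: "\<forall>x\<in>#D. even x \<and> count D x = 1"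
        using D unfolding distp_def partitions_def by blast+
      have "1 + sum_mset D = n" using d1 n(1) by simp
      moreover have "\<forall>x\<in>#D. 1 < x \<and> count D x = 1 \<and> odd x \<noteq> odd (1::nat)" using d2 gt1 by simp
      ultimately have "goodA n 1 D" unfolding goodA_def by simp
      hence m1: "P \<in> Spt1_do n" using P1 Spt_iff by blast
      have "spart P = 1" "nbig P = size D" using P1 spart_add[OF gt1] nbig_add[OF gt1] by simp+
      thus ?thesis using m1 True by simp
    next
      case False
      have "gA D = add_mset (m+1) Q" unfolding gA_def using PQ spart_add[OF gt] by simp
      hence P1: "P = add_mset (m+1) Q" using P False psi_def by simp
      have d1: "m + sum_mset Q = n - 1" and d2: "\<forall>x\<in>#Q. m < x \<and> even x \<and> count Q x = 1"
        using g unfolding goodD_def by blast+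
      have "m + 1 + sum_mset Q = n" using d1 n(1) by simp
      moreover have "\<forall>x\<in>#Q. m + 1 < x \<and> count Q x = 1 \<and> odd x \<noteq> odd (m + 1)" using d2 gt2 om by simp
      ultimately have "goodA n (m+1) Q" unfolding goodA_def by simp
      hence m1: "P \<in> Spt1_do n" using P1 Spt_iff by blast
      have "spart P = m + 1" "nbig P = size Q" using P1 spart_add[OF gt2] nbig_add[OF gt2] by simp+
      moreover have "size D = size Q + 1" using PQ by simp
      ultimately show ?thesis using m1 False om by simp
    qed
  qed
qed

lemma par2: assumes "P \<in> Spt1_do n"
  shows "(odd (spart P) \<longrightarrow> odd n) \<and> (even (spart P) \<longrightarrow> (even n \<longleftrightarrow> even (nbig P)))"
proof -
  obtain s Q where PQ: "P = add_mset s Q" and g: "goodA n s Q" using assms Spt_iff by blast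
  have gt: "\<forall>x\<in>#Q. s < x" using g unfolding goodA_def by auto
  show ?thesis using par[OF g] PQ spart_add[OF gt] nbig_add[OF gt] by simp
qed

lemma fin_Spt: "finite (Spt1_do n)"
  using finite_partitions unfolding Spt1_do_def by auto

theorem lemma5:
  fixes t :: nat
  assumes "0 < t"
  shows "B0 (2*t+1) = p_de (2*t) \<and>
         B0 (2*t) = p_de (2*t-1) + p_do (2*t-1) \<and>
         B1 (2*t) = p_de (2*t-1) \<and>
         B1 (2*t+1) = p_de (2*t) + p_do (2*t)"
proof -
  have de: "p_de n = card (distp even n)" for n unfolding p_de_def distp_def by simp
  have do: "p_do n = card (distp odd n)" for n unfolding p_do_def distp_def by simp
  have z: "p_de (2*t-1) = 0"
  proof -
    have "distp even (2*t-1) = {}"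
    proof (rule ccontr)
      assume "distp even (2*t-1) \<noteq> {}"
      then obtain D where "D \<in> distp even (2*t-1)" by auto
      hence a: "\<forall>x\<in>#D. even x" and b: "sum_mset D = 2*t-1" unfolding distp_def partitions_def by blast+
      have "even (sum_mset D)" using sum_even[OF a] .
      moreover have "2*t-1 = 2*(t-1)+1" using assms by simp
      ultimately show False using b by simp
    qed
    thus ?thesis using de by simp
  qed
  have e1: "{P\<in>Spt1_do (2*t). even (nbig P)} = {P\<in>Spt1_do (2*t). even (spart P)}"
    using par2[of _ "2*t"] by auto
  have e2: "{P\<in>Spt1_do (2*t). odd (nbig P)} = {}"
    using par2[of _ "2*t"] by auto
  have e3: "{P\<in>Spt1_do (2*t+1). even (nbig P)} = {P\<in>Spt1_do (2*t+1). odd (spart P) \<and> even (nbig P) = True}"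
    using par2[of _ "2*t+1"] by auto
  have e4: "{P\<in>Spt1_do (2*t+1). odd (nbig P)} = {P\<in>Spt1_do (2*t+1). even (spart P)} \<union> {P\<in>Spt1_do (2*t+1). odd (spart P) \<and> even (nbig P) = False}"
    using par2[of _ "2*t+1"] by auto
  have a1: "2 \<le> 2*t" "2 \<le> 2*t+1" "3 \<le> 2*t+1" "odd (2*t+1)" using assms by auto
  have c1: "B0 (2*t) = p_do (2*t-1)"
    unfolding B0_def e1 do using bij_betw_same_card[OF LA[OF a1(1)]] .
  have c2: "B0 (2*t+1) = p_de (2*t)"
    unfolding B0_def e3 de using bij_betw_same_card[OF LB[OF a1(3) a1(4), where b=True]] by simp
  have c3: "card {P\<in>Spt1_do (2*t+1). even (spart P)} = p_do (2*t)"
    unfolding do using bij_betw_same_card[OF LA[OF a1(2)]] by simp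
  have c4: "card {P\<in>Spt1_do (2*t+1). odd (spart P) \<and> even (nbig P) = False} = p_de (2*t)"
    unfolding de using bij_betw_same_card[OF LB[OF a1(3) a1(4), where b=False]] by simp
  have c5: "B1 (2*t+1) = p_de (2*t) + p_do (2*t)"
    unfolding B1_def e4
    by (subst card_Un_disjoint) (use fin_Spt c3 c4 in auto)
  have c6: "B1 (2*t) = 0" unfolding B1_def e2 by simp
  show ?thesis unfolding c1 c2 c5 z c6 by simp
qed

end
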